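(* Let $q$ be a prime power, $Q=q^m$, $\mathbb{L}=\mathrm{GF}(Q)$, $n\mid Q-1$, and $F_n=\{f\in\mathbb{L}^n : f_{qi\bmod n}=f_i^q\ \forall i\in\mathbb{Z}/n\mathbb{Z}\}$. Let $0\le\delta\le1/2$ and $s=\lfloor\delta n\rfloor$. If every $g\in\mathbb{L}^n$ can be written as $g=f+h$ with $f\in F_n$ and $|\{i : h_i\ne0\}|\le s$, then $$1+\frac{h_2(\delta)}{\log_2 q}+\delta\log_q(Q-1)\ge m-o(1),$$ where $h_2(\delta)=-\delta\log_2\delta-(1-\delta)\log_2(1-\delta)$ and $o(1)$ denotes a term tending to $0$ as $n\to\infty$. *)

theory Defs
  imports Complex_Main "HOL-Algebra.Ring" "HOL-Number_Theory.Prime_Powers"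
begin

text \<open>Vectors in L^n are modelled as functions nat => element type, indexed by
  {0..<n} (= Z/nZ); only the values at indices i < n matter.\<close>

definition vec_in :: "('a, 'b) ring_scheme \<Rightarrow> nat \<Rightarrow> (nat \<Rightarrow> 'a) \<Rightarrow> bool" where
  "vec_in R n v \<longleftrightarrow> (\<forall>i<n. v i \<in> carrier R)"

definition Fn :: "('a, 'b) ring_scheme \<Rightarrow> nat \<Rightarrow> nat \<Rightarrow> (nat \<Rightarrow> 'a) set" where
  "Fn R q n = {f. vec_in R n f \<and> (\<forall>i<n. f ((q * i) mod n) = f i [^]\<^bsub>R\<^esub> q)}"

definition hweight :: "('a, 'b) ring_scheme \<Rightarrow> nat \<Rightarrow> (nat \<Rightarrow> 'a) \<Rightarrow> nat" where
  "hweight R n h = card {i. i < n \<and> h i \<noteq> \<zero>\<^bsub>R\<^esub>}"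

definition h2 :: "real \<Rightarrow> real" where
  "h2 d = (if d = 0 \<or> d = 1 then 0 else - d * log 2 d - (1 - d) * log 2 (1 - d))"

end

theory Submission
  imports Defs "HOL-Algebra.Multiplicative_Group" "HOL-Number_Theory.Cong"
begin

lemma Fn_pow:
  assumes "monoid L" "f \<in> Fn L q n" "r < n"
  shows "f (q^j * r mod n) = f r [^]\<^bsub>L\<^esub> (q^j)"
proof (induction j)
  case 0
  have "f r \<in> carrier L" using assms by (auto simp: Fn_def vec_in_def)
  then show ?case using assms by (simp add: monoid.l_one[OF assms(1)])
next
  case (Suc j)
  have fr: "f r \<in> carrier L" using assms by (auto simp: Fn_def vec_in_def)
  have lt: "q^j * r mod n < n" using assms by simp
  have "q^Suc j * r mod n = (q * (q^j * r mod n)) mod n"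
    by (simp add: mod_mult_right_eq mult.assoc)
  also have "f \<dots> = f (q^j * r mod n) [^]\<^bsub>L\<^esub> q"
    using assms(2) lt by (auto simp: Fn_def)
  also have "\<dots> = f r [^]\<^bsub>L\<^esub> (q^j * q)"
    using Suc monoid.nat_pow_pow[OF assms(1) fr] by simp
  finally show ?case by (simp add: mult.commute)
qed

lemma (in field) root_count:
  assumes "finite (carrier R)" "(N::nat) \<ge> 2"
  shows "card {x \<in> carrier R. x [^] N = x} \<le> N"
proof -
  have sub: "{x \<in> carrier R. x [^] N = x} \<subseteq> insert \<zero> {x \<in> carrier R. x [^] (N - 1) = \<one>}"
  proof
    fix x assume x: "x \<in> {x \<in> carrier R. x [^] N = x}"
    show "x \<in> insert \<zero> {x \<in> carrier R. x [^] (N - 1) = \<one>}"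
    proof (cases "x = \<zero>")
      case False
      have "x [^] N = x [^] (N - 1) \<otimes> x"
        using assms(2) nat_pow_Suc[of x "N - 1"] by (simp del: nat_pow_Suc add: Suc_diff_1)
      then have "x [^] (N - 1) \<otimes> x = \<one> \<otimes> x" using x by simp
      moreover have "(x [^] (N - 1) \<otimes> x = \<one> \<otimes> x) = (x [^] (N - 1) = \<one>)"
        by (rule m_rcancel[OF False]) (use x in auto)
      ultimately have "x [^] (N - 1) = \<one>" by blast
      then show ?thesis using x by simp
    qed simp
  qed
  have "card {x \<in> carrier R. x [^] (N - 1) = \<one>} \<le> N - 1"
    using num_roots_le_deg[OF assms(1)] assms(2) by simp
  moreover have "card {x \<in> carrier R. x [^] N = x} \<le> card (insert \<zero> {x \<in> carrier R. x [^] (N - 1) = \<one>})"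
    by (rule card_mono) (use sub assms(1) in auto)
  moreover have "card (insert \<zero> {x \<in> carrier R. x [^] (N - 1) = \<one>}) \<le> Suc (card {x \<in> carrier R. x [^] (N - 1) = \<one>})"
    by (rule card_insert_le_m1) auto
  ultimately show ?thesis using assms(2) by linarith
qed


lemma card_RF:
  fixes L :: "('a,'b) ring_scheme"
  assumes L: "field L" "finite (carrier L)" and q: "q \<ge> 2" and n: "n > 0"
    and cop: "coprime q n" and qm: "[q^m = 1] (mod n)" and m: "m > 0"
  shows "S \<subseteq> {..<n} \<Longrightarrow> (\<forall>i\<in>S. q*i mod n \<in> S) \<Longrightarrow>
    card ((\<lambda>f. restrict f S) ` Fn L q n) \<le> q ^ card S"
proof (induction "card S" arbitrary: S rule: less_induct)
  case less
  interpret L: field L by fact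
  have mon: "monoid L" by (rule L.is_monoid)
  let ?R = "\<lambda>S. (\<lambda>f. restrict f S) ` Fn L q n"
  have finR: "finite (?R T)" if T: "T \<subseteq> {..<n}" for T
  proof -
    have "?R T \<subseteq> PiE T (\<lambda>_. carrier L)" using T by (auto simp: Fn_def vec_in_def)
    moreover have "finite (PiE T (\<lambda>_. carrier L))"
      using T L(2) finite_subset by (intro finite_PiE) auto
    ultimately show "finite (?R T)" by (rule finite_subset)
  qed
  show ?case
  proof (cases "S = {}")
    case True
    have sub0: "?R S \<subseteq> {\<lambda>_. undefined}" using True by auto
    have "card (?R S) \<le> card {\<lambda>_. undefined}" using card_mono[OF _ sub0] by simp
    then show ?thesis using True by simp
  next
    case False
    then obtain r where r: "r \<in> S" by auto
    have rn: "r < n" using r less.prems by auto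
    define Ob where "Ob = {i. \<exists>j. i = q^j * r mod n}"
    have step: "q^Suc j * r mod n = q * (q^j * r mod n) mod n" for j
      by (simp add: mod_mult_right_eq mult.assoc)
    have OS: "Ob \<subseteq> S"
    proof
      fix i assume "i \<in> Ob"
      then obtain j where j: "i = q^j*r mod n" by (auto simp: Ob_def)
      have "q^j*r mod n \<in> S"
      proof (induction j)
        case 0 show ?case using r rn by simp
      next
        case (Suc j) then show ?case using less.prems(2) step[of j] by metis
      qed
      then show "i \<in> S" using j by simp
    qed
    have rO: "r \<in> Ob" unfolding Ob_def using rn by (auto intro: exI[of _ 0])
    have Sn: "finite S" using less.prems(1) finite_subset by blast
    have finO: "finite Ob" using OS Sn finite_subset by blast
    have cl: "\<forall>i\<in>S-Ob. q*i mod n \<in> S-Ob"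
    proof
      fix i assume i: "i \<in> S - Ob"
      have qi: "q*i mod n \<in> S" using i less.prems(2) by auto
      have "q*i mod n \<notin> Ob"
      proof
        assume "q*i mod n \<in> Ob"
        then obtain j where j: "q*i mod n = q^j*r mod n" by (auto simp: Ob_def)
        have "[i = q^m * i] (mod n)" using cong_scalar_right[OF qm, of i] by (simp add: cong_sym)
        also have "q^m * i = q^(m-1) * (q*i)" using m
          by (metis Suc_diff_1 mult.assoc power_Suc2)
        also have "[q^(m-1) * (q*i) = q^(m-1) * (q^j*r)] (mod n)"
          using j by (intro cong_scalar_left) (simp add: cong_def)
        finally have "i mod n = q^(m-1+j)*r mod n" by (simp add: cong_def power_add mult.assoc)
        then have "i \<in> Ob" using i less.prems(1) unfolding Ob_def by auto
        then show False using i by simp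
      qed
      then show "q*i mod n \<in> S-Ob" using qi by simp
    qed
    have card_less: "card (S - Ob) < card S" using r rO Sn by (intro psubset_card_mono) auto
    have IH: "card (?R (S-Ob)) \<le> q^card(S-Ob)"
      using less.hyps[OF card_less] less.prems cl by auto
    have "\<not> inj_on (\<lambda>j. q^j*r mod n) {..card Ob}"
    proof
      assume inj: "inj_on (\<lambda>j. q^j*r mod n) {..card Ob}"
      have "(\<lambda>j. q^j*r mod n) ` {..card Ob} \<subseteq> Ob" by (auto simp: Ob_def)
      from card_inj_on_le[OF inj this finO] show False by simp
    qed
    then obtain a b where ab: "a \<le> card Ob" "b \<le> card Ob" "a \<noteq> b" "q^a*r mod n = q^b*r mod n"
      unfolding inj_on_def by auto
    define i where "i = min a b"
    define j where "j = max a b"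
    have ij: "i < j" "j \<le> card Ob" "q^i*r mod n = q^j*r mod n"
      using ab by (auto simp: i_def j_def min_def max_def)
    define d where "d = j - i"
    have d: "d \<ge> 1" "d \<le> card Ob" using ij by (auto simp: d_def)
    have "[q^i * r = q^i * (q^d * r)] (mod n)"
      using ij unfolding cong_def d_def
      by (metis le_add_diff_inverse less_or_eq_imp_le mult.assoc power_add)
    then have "[r = q^d*r] (mod n)"
      using cong_mult_lcancel_nat[of "q^i" n] cop by simp
    then have rd: "q^d*r mod n = r" using rn by (simp add: cong_def)
    have fixr: "f r [^]\<^bsub>L\<^esub> (q^d) = f r" if "f \<in> Fn L q n" for f
      using Fn_pow[OF mon that rn, of d] rd by simp
    have injr: "inj_on (\<lambda>g. g r) (?R Ob)"
    proof (rule inj_onI)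
      fix g g' assume g: "g \<in> ?R Ob" and g': "g' \<in> ?R Ob" and eq: "g r = g' r"
      obtain f where f: "f \<in> Fn L q n" "g = restrict f Ob" using g by auto
      obtain f' where f': "f' \<in> Fn L q n" "g' = restrict f' Ob" using g' by auto
      have fr: "f r = f' r" using eq f f' rO by simp
      show "g = g'"
      proof (rule ext)
        fix x
        show "g x = g' x"
        proof (cases "x \<in> Ob")
          case True
          then obtain k where k: "x = q^k*r mod n" by (auto simp: Ob_def)
          have "f x = f' x" using Fn_pow[OF mon f(1) rn, of k] Fn_pow[OF mon f'(1) rn, of k] fr k
            by simp
          then show ?thesis using f f' True by simp
        qed (use f f' in simp)
      qed
    qed
    have imr: "(\<lambda>g. g r) ` ?R Ob \<subseteq> {x \<in> carrier L. x [^]\<^bsub>L\<^esub> (q^d) = x}"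
      using fixr rO rn by (auto simp: Fn_def vec_in_def)
    have "q^d \<ge> 2" using q d
      using power_increasing[of 1 d q] by simp
    then have "card {x \<in> carrier L. x [^]\<^bsub>L\<^esub> (q^d) = x} \<le> q^d"
      using L.root_count[OF L(2)] by blast
    moreover have "card (?R Ob) = card ((\<lambda>g. g r) ` ?R Ob)" using card_image[OF injr] by simp
    moreover have "card ((\<lambda>g. g r) ` ?R Ob) \<le> card {x \<in> carrier L. x [^]\<^bsub>L\<^esub> (q^d) = x}"
      using imr L(2) by (intro card_mono) auto
    moreover have "q^d \<le> q^card Ob" using q d by (intro power_increasing) auto
    ultimately have cO: "card (?R Ob) \<le> q^card Ob" by linarith
    have injp: "inj_on (\<lambda>g. (restrict g (S-Ob), restrict g Ob)) (?R S)"
    proof (rule inj_onI)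
      fix g g' assume g: "g \<in> ?R S" and g': "g' \<in> ?R S"
        and eq: "(restrict g (S-Ob), restrict g Ob) = (restrict g' (S-Ob), restrict g' Ob)"
      obtain f where f: "g = restrict f S" using g by auto
      obtain f' where f': "g' = restrict f' S" using g' by auto
      show "g = g'"
      proof (rule ext)
        fix x
        from eq have e1: "restrict g (S-Ob) x = restrict g' (S-Ob) x"
          and e2: "restrict g Ob x = restrict g' Ob x" by auto
        show "g x = g' x" using e1 e2 f f' OS
          by (cases "x \<in> S"; cases "x \<in> Ob") (auto simp: restrict_def)
      qed
    qed
    have imp: "(\<lambda>g. (restrict g (S-Ob), restrict g Ob)) ` ?R S \<subseteq> ?R (S-Ob) \<times> ?R Ob"
    proof
      fix y assume "y \<in> (\<lambda>g. (restrict g (S-Ob), restrict g Ob)) ` ?R S"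
      then obtain f where f: "f \<in> Fn L q n" "y = (restrict (restrict f S) (S-Ob), restrict (restrict f S) Ob)"
        by auto
      have "restrict (restrict f S) (S-Ob) = restrict f (S-Ob)" by (simp add: Int_absorb Diff_subset Int_absorb1)
      moreover have "restrict (restrict f S) Ob = restrict f Ob" using OS by (simp add: Int_absorb1)
      ultimately show "y \<in> ?R (S-Ob) \<times> ?R Ob" using f by auto
    qed
    have "card (?R S) = card ((\<lambda>g. (restrict g (S-Ob), restrict g Ob)) ` ?R S)"
      using card_image[OF injp] by simp
    also have "\<dots> \<le> card (?R (S-Ob) \<times> ?R Ob)"
      using imp finR[of "S-Ob"] finR[of Ob] less.prems(1) OS by (intro card_mono finite_cartesian_product) auto
    also have "\<dots> = card (?R (S-Ob)) * card (?R Ob)" by (rule card_cartesian_product)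
    also have "\<dots> \<le> q^card(S-Ob) * q^card Ob" using IH cO by (intro mult_mono) auto
    also have "\<dots> = q^card S"
      using card_Diff_subset[OF finO OS] card_mono[OF Sn OS]
      by (simp add: power_add[symmetric])
    finally show ?thesis .
  qed
qed


lemma entropy_bound:
  fixes \<delta> :: real and n :: nat
  assumes "0 \<le> \<delta>" "\<delta> \<le> 1/2"
  shows "real (\<Sum>j\<le>nat \<lfloor>\<delta> * real n\<rfloor>. n choose j) \<le> 2 powr (real n * h2 \<delta>)"
proof (cases "\<delta> = 0")
  case True
  then show ?thesis by (simp add: h2_def)
next
  case False
  then have d0: "0 < \<delta>" "\<delta> < 1" using assms by auto
  define s where "s = nat \<lfloor>\<delta> * real n\<rfloor>"
  have sdn: "real s \<le> \<delta> * real n" unfolding s_def using d0 by simp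
  have sn: "s \<le> n"
  proof -
    have "real s \<le> real n" using sdn d0 by (smt (verit) mult_left_le_one_le of_nat_0_le_iff)
    then show ?thesis by simp
  qed
  define c where "c = \<delta> powr (\<delta> * real n) * (1 - \<delta>) powr ((1 - \<delta>) * real n)"
  have cpos: "c > 0" using d0 by (simp add: c_def)
  have c2: "c * 2 powr (real n * h2 \<delta>) = 1"
    using d0 unfolding c_def h2_def
    by (simp add: powr_def log_def exp_add[symmetric] field_simps)
  have lowj: "c \<le> \<delta>^j * (1-\<delta>)^(n-j)" if j: "j \<le> s" for j
  proof -
    define r where "r = \<delta> / (1 - \<delta>)"
    have r: "0 < r" "r \<le> 1" using d0 assms by (auto simp: r_def field_simps)
    have jn: "j \<le> n" using j sn by simp
    have "\<delta>^j * (1-\<delta>)^(n-j) = (1-\<delta>) powr real n * r powr real j"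
      using d0 jn unfolding r_def
      by (simp add: powr_realpow[symmetric] powr_divide powr_diff of_nat_diff field_simps)
    moreover have "r powr (\<delta> * real n) \<le> r powr real j"
      using r j sdn by (intro powr_mono') auto
    moreover have "c = (1-\<delta>) powr real n * r powr (\<delta> * real n)"
      using d0 unfolding c_def r_def
      by (simp add: powr_divide powr_diff left_diff_distrib powr_mult_base field_simps)
    ultimately show ?thesis using d0 by (simp add: mult_left_mono)
  qed
  have "(\<Sum>j\<le>s. real (n choose j) * c) \<le> (\<Sum>j\<le>s. real (n choose j) * (\<delta>^j * (1-\<delta>)^(n-j)))"
    using lowj by (intro sum_mono mult_left_mono) auto
  also have "\<dots> \<le> (\<Sum>j\<le>n. real (n choose j) * (\<delta>^j * (1-\<delta>)^(n-j)))"
    using sn d0 by (intro sum_mono2) auto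
  also have "\<dots> = (\<delta> + (1 - \<delta>))^n"
    unfolding binomial_ring by (simp add: mult.assoc)
  also have "\<dots> = 1" by simp
  finally have "real (\<Sum>j\<le>s. n choose j) * c \<le> 1"
    by (simp add: sum_distrib_right)
  then have "real (\<Sum>j\<le>s. n choose j) * c \<le> c * 2 powr (real n * h2 \<delta>)" using c2 by simp
  then show ?thesis using cpos unfolding s_def by (simp add: mult.commute)
qed


lemma final_ineq:
  fixes q n m s Q :: nat and B h \<delta> :: real
  assumes q: "q \<ge> 2" and n: "n > 0" and Q: "Q = q^m" "Q \<ge> 2"
    and main: "real (Q^n) \<le> real (q^n) * B * real ((Q-1)^s)"
    and B: "1 \<le> B" "B \<le> 2 powr (real n * h)" and s: "real s \<le> \<delta> * real n" and d: "\<delta> \<ge> 0"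
  shows "real m \<le> 1 + h / log 2 (real q) + \<delta> * log (real q) (real Q - 1)"
proof -
  have q1: "real q > 1" using q by simp
  have Q1: "real Q - 1 \<ge> 1" using Q(2) by simp
  have "log (real q) (real (Q^n)) \<le> log (real q) (real (q^n) * B * real ((Q-1)^s))"
  proof -
    have p1: "0 < real ((Q-1)^s)" using Q(2) by simp
    have p2: "0 < real (q^n)" using q by simp
    have p3: "0 < real (q^n) * B * real ((Q-1)^s)" using p1 p2 B(1) by simp
    have p4: "0 < real (Q^n)" using Q(2) by simp
    show ?thesis using main q1 p3 p4 by (subst log_le_cancel_iff) auto
  qed
  moreover have "log (real q) (real (Q^n)) = real n * real m"
    using q1 Q by (simp add: log_nat_power)
  moreover have "log (real q) (real (q^n) * B * real ((Q-1)^s))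
      = real n + log (real q) B + real s * log (real q) (real Q - 1)"
    using q1 Q(2) B by (simp add: log_mult log_nat_power of_nat_diff)
  moreover have "log (real q) B \<le> real n * h * log (real q) 2"
    using B q1 log_le_cancel_iff[of "real q" B "2 powr (real n * h)"] by (simp add: log_powr)
  moreover have "log (real q) 2 = 1 / log 2 (real q)" using q1 by (simp add: log_def)
  moreover have "real s * log (real q) (real Q - 1) \<le> \<delta> * real n * log (real q) (real Q - 1)"
    using s Q1 q1 by (intro mult_right_mono) auto
  ultimately have "real n * real m \<le> real n * (1 + h / log 2 (real q) + \<delta> * log (real q) (real Q - 1))"
    by (simp add: algebra_simps)
  then show ?thesis using n by simp
qed


lemma card_H:
  fixes L :: "('a,'b) ring_scheme"
  assumes fin: "finite (carrier L)" and z: "\<zero>\<^bsub>L\<^esub> \<in> carrier L" and Q2: "card (carrier L) \<ge> 2"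
  shows "card {h \<in> PiE {..<n} (\<lambda>_. carrier L). card {i. i < n \<and> h i \<noteq> \<zero>\<^bsub>L\<^esub>} \<le> s}
    \<le> (\<Sum>j\<le>s. n choose j) * (card (carrier L) - 1)^s"
proof -
  define Q where "Q = card (carrier L)"
  define TS where "TS = {T. T \<subseteq> {..<n} \<and> card T \<le> s}"
  define P where "P T = PiE {..<n} (\<lambda>i. if i \<in> T then carrier L - {\<zero>\<^bsub>L\<^esub>} else {\<zero>\<^bsub>L\<^esub>})" for T
  have finTS: "finite TS" unfolding TS_def by (rule finite_subset[of _ "Pow {..<n}"]) auto
  have finP: "finite (P T)" for T unfolding P_def using fin by (intro finite_PiE) auto
  have sub: "{h \<in> PiE {..<n} (\<lambda>_. carrier L). card {i. i < n \<and> h i \<noteq> \<zero>\<^bsub>L\<^esub>} \<le> s} \<subseteq> (\<Union>T\<in>TS. P T)"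
  proof
    fix h assume h: "h \<in> {h \<in> PiE {..<n} (\<lambda>_. carrier L). card {i. i < n \<and> h i \<noteq> \<zero>\<^bsub>L\<^esub>} \<le> s}"
    let ?T = "{i. i < n \<and> h i \<noteq> \<zero>\<^bsub>L\<^esub>}"
    have "?T \<in> TS" using h by (auto simp: TS_def)
    moreover have "h \<in> P ?T" using h by (auto simp: P_def PiE_def Pi_def)
    ultimately show "h \<in> (\<Union>T\<in>TS. P T)" by blast
  qed
  have cardP: "card (P T) \<le> (Q - 1)^s" if "T \<in> TS" for T
  proof -
    have T: "T \<subseteq> {..<n}" "card T \<le> s" using that by (auto simp: TS_def)
    have "card (P T) = (\<Prod>i<n. card (if i \<in> T then carrier L - {\<zero>\<^bsub>L\<^esub>} else {\<zero>\<^bsub>L\<^esub>}))"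
      unfolding P_def by (simp add: card_PiE)
    also have "\<dots> = (\<Prod>i<n. if i \<in> T then Q - 1 else 1)"
      using fin z unfolding Q_def by (intro prod.cong) auto
    also have "\<dots> = (\<Prod>i\<in>{i\<in>{..<n}. i \<in> T}. Q - 1)"
      using prod.inter_filter[of "{..<n}" "\<lambda>_. Q - 1" "\<lambda>i. i \<in> T"] by simp
    also have "{i\<in>{..<n}. i \<in> T} = T" using T by auto
    also have "(\<Prod>i\<in>T. Q - 1) = (Q-1)^card T" by simp
    also have "\<dots> \<le> (Q-1)^s" using Q2 T unfolding Q_def by (intro power_increasing) auto
    finally show ?thesis .
  qed
  have "card {h \<in> PiE {..<n} (\<lambda>_. carrier L). card {i. i < n \<and> h i \<noteq> \<zero>\<^bsub>L\<^esub>} \<le> s}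
      \<le> card (\<Union>T\<in>TS. P T)"
    using sub finTS finP by (intro card_mono) auto
  also have "\<dots> \<le> (\<Sum>T\<in>TS. card (P T))" by (rule card_UN_le[OF finTS])
  also have "\<dots> \<le> (\<Sum>T\<in>TS. (Q-1)^s)" using cardP by (rule sum_mono)
  also have "\<dots> = card TS * (Q-1)^s" by simp
  also have "\<dots> \<le> (\<Sum>j\<le>s. n choose j) * (Q-1)^s"
  proof (rule mult_right_mono)
    have "TS = (\<Union>j\<le>s. {T. T \<subseteq> {..<n} \<and> card T = j})" by (auto simp: TS_def)
    then have "card TS \<le> (\<Sum>j\<le>s. card {T. T \<subseteq> {..<n} \<and> card T = j})"
      using card_UN_le[of "{..s}" "\<lambda>j. {T. T \<subseteq> {..<n} \<and> card T = j}"] by simp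
    also have "\<dots> = (\<Sum>j\<le>s. n choose j)" by (simp add: n_subsets)
    finally show "card TS \<le> (\<Sum>j\<le>s. n choose j)" .
  qed simp
  finally show ?thesis unfolding Q_def .
qed

theorem corollary11p4:
  fixes q :: nat and \<delta> :: real
  assumes "primepow q"
    and "0 \<le> \<delta>" and "\<delta> \<le> 1/2"
  shows "\<exists>\<epsilon> :: nat \<Rightarrow> real. \<epsilon> \<longlonglongrightarrow> 0 \<and>
    (\<forall>(L :: nat ring) (m :: nat) (n :: nat).
       field L \<and> finite (carrier L) \<and> card (carrier L) = q ^ m \<and> n dvd (q ^ m - 1) \<and>
       (\<forall>g. vec_in L n g \<longrightarrow>
          (\<exists>f h. f \<in> Fn L q n \<and> vec_in L n h \<and> (\<forall>i<n. g i = f i \<oplus>\<^bsub>L\<^esub> h i) \<and>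
                 hweight L n h \<le> nat \<lfloor>\<delta> * real n\<rfloor>))
       \<longrightarrow> 1 + h2 \<delta> / log 2 (real q) + \<delta> * log (real q) (real (q ^ m) - 1) \<ge> real m - \<epsilon> n)"
proof -
  have q2: "q \<ge> 2" using primepow_gt_Suc_0[OF assms(1)] by simp
  show ?thesis
  proof (rule exI[of _ "\<lambda>_. 0"], intro conjI allI impI)
    show "(\<lambda>_. 0::real) \<longlonglongrightarrow> 0" by simp
    fix L :: "nat ring" and m n
    assume A: "field L \<and> finite (carrier L) \<and> card (carrier L) = q ^ m \<and> n dvd (q ^ m - 1) \<and>
       (\<forall>g. vec_in L n g \<longrightarrow>
          (\<exists>f h. f \<in> Fn L q n \<and> vec_in L n h \<and> (\<forall>i<n. g i = f i \<oplus>\<^bsub>L\<^esub> h i) \<and>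
                 hweight L n h \<le> nat \<lfloor>\<delta> * real n\<rfloor>))"
    then have fL: "field L" and finL: "finite (carrier L)" and cardL: "card (carrier L) = q^m"
      and dv: "n dvd q^m - 1"
      and dec: "\<forall>g. vec_in L n g \<longrightarrow>
          (\<exists>f h. f \<in> Fn L q n \<and> vec_in L n h \<and> (\<forall>i<n. g i = f i \<oplus>\<^bsub>L\<^esub> h i) \<and>
                 hweight L n h \<le> nat \<lfloor>\<delta> * real n\<rfloor>)"
      by auto
    interpret L: field L by fact
    have "card {\<one>\<^bsub>L\<^esub>, \<zero>\<^bsub>L\<^esub>} \<le> card (carrier L)" using finL by (intro card_mono) auto
    then have Q2: "q^m \<ge> 2" using L.one_not_zero cardL by simp
    have m0: "m > 0" using Q2 by (cases m) auto
    have n0: "n > 0" using dv Q2 by (cases n) auto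
    have qm: "[q^m = 1] (mod n)" using dv Q2 by (subst cong_altdef_nat) auto
    have "coprime (q^m) n" using cong_imp_coprime[OF cong_sym[OF qm]] by simp
    then have cop: "coprime q n" using m0 by simp
    define N where "N = {..<n}"
    define s where "s = nat \<lfloor>\<delta> * real n\<rfloor>"
    define RF where "RF = (\<lambda>f. restrict f N) ` Fn L q n"
    define H where "H = {h \<in> PiE N (\<lambda>_. carrier L). card {i. i < n \<and> h i \<noteq> \<zero>\<^bsub>L\<^esub>} \<le> s}"
    define G where "G = PiE N (\<lambda>_. carrier L)"
    define B where "B = (\<Sum>j\<le>s. n choose j)"
    have cRF: "card RF \<le> q^n"
      using card_RF[OF fL finL q2 n0 cop qm m0, of N] unfolding RF_def N_def by auto
    have cH: "card H \<le> B * (q^m - 1)^s"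
      using card_H[OF finL L.zero_closed, of n s] cardL Q2 unfolding H_def N_def B_def by simp
    have finG: "finite G" unfolding G_def N_def using finL by (intro finite_PiE) auto
    have RFG: "RF \<subseteq> G"
    proof
      fix x assume "x \<in> RF"
      then obtain f where "f \<in> Fn L q n" "x = restrict f N" unfolding RF_def by auto
      then show "x \<in> G" unfolding G_def N_def by (simp add: Fn_def vec_in_def restrict_PiE_iff)
    qed
    have finRF: "finite RF" using RFG finG finite_subset by blast
    have finH: "finite H" using finG finite_subset unfolding H_def G_def by fastforce
    have cG: "card G = (q^m)^n" unfolding G_def N_def using finL cardL by (simp add: card_PiE)
    have GS: "G \<subseteq> (\<lambda>(f,h). restrict (\<lambda>i. f i \<oplus>\<^bsub>L\<^esub> h i) N) ` (RF \<times> H)"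
    proof
      fix g assume g: "g \<in> G"
      have "vec_in L n g" using g by (auto simp: G_def N_def vec_in_def PiE_def Pi_def)
      then obtain f h where fh: "f \<in> Fn L q n" "vec_in L n h" "\<forall>i<n. g i = f i \<oplus>\<^bsub>L\<^esub> h i"
        "hweight L n h \<le> s" using dec unfolding s_def by blast
      have "restrict f N \<in> RF" using fh unfolding RF_def by blast
      moreover have "restrict h N \<in> H"
      proof -
        have "{i. i < n \<and> restrict h N i \<noteq> \<zero>\<^bsub>L\<^esub>} = {i. i < n \<and> h i \<noteq> \<zero>\<^bsub>L\<^esub>}"
          unfolding N_def by auto
        then show ?thesis using fh unfolding H_def N_def
          by (simp add: vec_in_def hweight_def restrict_PiE_iff)
      qed
      moreover have "g = restrict (\<lambda>i. restrict f N i \<oplus>\<^bsub>L\<^esub> restrict h N i) N"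
      proof (rule ext)
        fix i show "g i = restrict (\<lambda>i. restrict f N i \<oplus>\<^bsub>L\<^esub> restrict h N i) N i"
          using g fh by (cases "i \<in> N") (auto simp: G_def N_def PiE_def extensional_def)
      qed
      ultimately show "g \<in> (\<lambda>(f,h). restrict (\<lambda>i. f i \<oplus>\<^bsub>L\<^esub> h i) N) ` (RF \<times> H)"
        by (intro image_eqI[of _ _ "(restrict f N, restrict h N)"]) auto
    qed
    have "card G \<le> card ((\<lambda>(f,h). restrict (\<lambda>i. f i \<oplus>\<^bsub>L\<^esub> h i) N) ` (RF \<times> H))"
      using GS finRF finH by (intro card_mono) auto
    also have "\<dots> \<le> card (RF \<times> H)" by (rule card_image_le) (use finRF finH in auto)
    also have "\<dots> = card RF * card H" by (rule card_cartesian_product)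
    also have "\<dots> \<le> q^n * (B * (q^m - 1)^s)" using cRF cH by (intro mult_mono) auto
    finally have main_nat: "(q^m)^n \<le> q^n * B * (q^m - 1)^s" using cG by (simp add: mult.assoc)
    have main: "real ((q^m)^n) \<le> real (q^n) * real B * real ((q^m - 1)^s)"
      using main_nat by (metis of_nat_le_iff of_nat_mult)
    have "(\<Sum>j\<le>0. n choose j) \<le> (\<Sum>j\<le>s. n choose j)" by (intro sum_mono2) auto
    then have "1 \<le> B" unfolding B_def by simp
    then have B1: "1 \<le> real B" by simp
    have B2: "real B \<le> 2 powr (real n * h2 \<delta>)"
      using entropy_bound[OF assms(2,3), of n] unfolding B_def s_def .
    have sd: "real s \<le> \<delta> * real n" unfolding s_def using assms(2) by simp
    have "real m \<le> 1 + h2 \<delta> / log 2 (real q) + \<delta> * log (real q) (real (q^m) - 1)"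
      using final_ineq[OF q2 n0 refl Q2 main B1 B2 sd assms(2)] .
    then show "1 + h2 \<delta> / log 2 (real q) + \<delta> * log (real q) (real (q ^ m) - 1) \<ge> real m - 0"
      by simp
  qed
qed

end
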